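(* Let $A\in\mathbb{R}^{n\times n}$ and $C\in\mathbb{R}^{m\times n}$. Define subspaces of $\mathbb{R}^n$ by $S_0:=\mathcal{N}(C)$ (the null space of $C$) and $S_k:=AS_{k-1}\cap S_0$ for $k=1,2,\ldots$, where $AS:=\{As: s\in S\}$. Then the linear system $x^+=Ax$, $y=Cx$ (with state space $\mathbb{R}^n$ and output space $\mathbb{R}^m$) is deadbeat observable if and only if $S_n=\{0\}$.
   Context: Consider a discrete-time system $x^+=f(x)$, $y=h(x)$ with $x\in\mathcal{X}\subset\mathbb{R}^n$, $y\in\mathcal{Y}\subset\mathbb{R}^m$; its solution from $x$ is $\phi(k,x)$, with $\phi(0,x)=x$, $\phi(k+1,x)=f(\phi(k,x))$. Given a set-valued map $g:\mathcal{X}\times\mathcal{Y}\rightrightarrows\mathcal{X}$, consider the cascade $x^+=f(x)$, $\hat x^+\in g(\hat x,h(x))$; a solution of the second component is any sequence $\psi(k,\hat x,x)$ with $\psi(0,\hat x,x)=\hat x$ and $\psi(k+1,\hat x,x)\in g(\psi(k,\hat x,x),h(\phi(k,x)))$ for all $k$. The system $\hat x^+\in g(\hat x,y)$ is a deadbeat observer for $x^+=f(x),\,y=h(x)$ if there exists an integer $p\ge1$ such that all such solutions satisfy $\psi(k,\hat x,x)=\phi(k,x)$ for all $x,\hat x\in\mathcal{X}$ and all $k\ge p$. The system is deadbeat observable if a deadbeat observer for it exists. *)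

theory Defs
  imports "HOL-Analysis.Analysis"
begin

definition observer_solution ::
  "('x \<Rightarrow> 'x) \<Rightarrow> ('x \<Rightarrow> 'y) \<Rightarrow> ('x \<Rightarrow> 'y \<Rightarrow> 'x set) \<Rightarrow> 'x \<Rightarrow> 'x \<Rightarrow> (nat \<Rightarrow> 'x) \<Rightarrow> bool"
  where "observer_solution f h g xh x psi \<longleftrightarrow>
           psi 0 = xh \<and> (\<forall>k. psi (Suc k) \<in> g (psi k) (h ((f ^^ k) x)))"

definition setvalued_map :: "'x set \<Rightarrow> 'y set \<Rightarrow> ('x \<Rightarrow> 'y \<Rightarrow> 'x set) \<Rightarrow> bool"
  where "setvalued_map X Y g \<longleftrightarrow> (\<forall>xh\<in>X. \<forall>y\<in>Y. g xh y \<noteq> {} \<and> g xh y \<subseteq> X)"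

definition deadbeat_observer ::
  "'x set \<Rightarrow> ('x \<Rightarrow> 'x) \<Rightarrow> ('x \<Rightarrow> 'y) \<Rightarrow> ('x \<Rightarrow> 'y \<Rightarrow> 'x set) \<Rightarrow> bool"
  where "deadbeat_observer X f h g \<longleftrightarrow>
    (\<exists>p::nat. p \<ge> 1 \<and> (\<forall>x\<in>X. \<forall>xh\<in>X. \<forall>psi. observer_solution f h g xh x psi \<longrightarrow>
        (\<forall>k\<ge>p. psi k = (f ^^ k) x)))"

definition deadbeat_observable ::
  "'x set \<Rightarrow> 'y set \<Rightarrow> ('x \<Rightarrow> 'x) \<Rightarrow> ('x \<Rightarrow> 'y) \<Rightarrow> bool"
  where "deadbeat_observable X Y f h \<longleftrightarrow>
    (\<exists>g. setvalued_map X Y g \<and> deadbeat_observer X f h g)"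

fun unobs_seq :: "real^'n^'n \<Rightarrow> real^'n^'m \<Rightarrow> nat \<Rightarrow> (real^'n) set" where
  "unobs_seq A C 0 = {x. C *v x = 0}"
| "unobs_seq A C (Suc k) = ((\<lambda>s. A *v s) ` unobs_seq A C k) \<inter> {x. C *v x = 0}"

end

theory Submission
  imports Defs
begin

lemma S_sub: "subspace (unobs_seq A C k)"
  by (induction k) (auto intro!: subspace_inter linear_subspace_image linear_subspace_kernel matrix_vector_mul_linear)

lemma S_dec: "unobs_seq A C (Suc k) \<subseteq> unobs_seq A C k"
  by (induction k) auto

lemma S_zero: "0 \<in> unobs_seq A C k"
  by (induction k) (auto intro!: image_eqI[where x=0])

lemma S_stable: "unobs_seq A C (Suc k) = unobs_seq A C k \<Longrightarrow> unobs_seq A C (k + j) = unobs_seq A C k"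
proof (induction j)
  case 0 then show ?case by simp
next
  case (Suc j)
  have "unobs_seq A C (Suc (k + j)) = unobs_seq A C (Suc k)"
  proof -
    have "unobs_seq A C (Suc (k + j)) = ((\<lambda>s. A *v s) ` unobs_seq A C (k+j)) \<inter> {x. C *v x = 0}" by simp
    also have "\<dots> = ((\<lambda>s. A *v s) ` unobs_seq A C k) \<inter> {x. C *v x = 0}" using Suc by simp
    finally show ?thesis by simp
  qed
  then show ?case using Suc by simp
qed

lemma dim_strict: fixes S T :: "'a::euclidean_space set" assumes "subspace S" "subspace T" "S \<subseteq> T" "S \<noteq> T" shows "dim S < dim T"
proof (rule ccontr)
  assume "\<not> dim S < dim T"
  then have "dim T \<le> dim S" by simp
  then have "span S = span T" by (rule dim_eq_span[OF assms(3)])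
  moreover have "span S = S" using assms(1) by (simp add: span_eq_iff)
  moreover have "span T = T" using assms(2) by (simp add: span_eq_iff)
  ultimately show False using assms(4) by simp
qed

lemma S_exists_stable: "\<exists>k\<le>CARD('n). unobs_seq (A::real^'n^'n) (C::real^'n^'m) (Suc k) = unobs_seq A C k"
proof (rule ccontr)
  assume H: "\<not> ?thesis"
  have "k \<le> Suc CARD('n) \<Longrightarrow> dim (unobs_seq A C k) + k \<le> dim (unobs_seq A C 0)" for k
  proof (induction k)
    case 0 then show ?case by simp
  next
    case (Suc k)
    have "dim (unobs_seq A C (Suc k)) < dim (unobs_seq A C k)"
      using H Suc.prems by (intro dim_strict S_sub S_dec) auto
    then show ?case using Suc by simp
  qed
  from this[of "Suc CARD('n)"]
  have "Suc CARD('n) \<le> dim (unobs_seq A C 0)" by simp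
  moreover have "dim (unobs_seq A C 0) \<le> CARD('n)"
    using dim_subset_UNIV[of "unobs_seq A C 0"] by simp
  ultimately show False by simp
qed

lemma funpow_zero: "((\<lambda>x. (A::real^'n^'n) *v x) ^^ k) 0 = 0"
  by (induction k) auto

lemma S_char: "x \<in> unobs_seq A C k \<Longrightarrow> \<exists>w. ((\<lambda>x. A *v x) ^^ k) w = x \<and> (\<forall>i\<le>k. C *v (((\<lambda>x. A *v x) ^^ i) w) = 0)"
proof (induction k arbitrary: x)
  case 0 then show ?case by (intro exI[of _ x]) auto
next
  case (Suc k)
  then obtain s where s: "s \<in> unobs_seq A C k" "x = A *v s" "C *v x = 0" by auto
  from Suc.IH[OF s(1)] obtain w where w: "((\<lambda>x. A *v x) ^^ k) w = s" "\<forall>i\<le>k. C *v (((\<lambda>x. A *v x) ^^ i) w) = 0" by blast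
  show ?case
  proof (intro exI[of _ w] conjI allI impI)
    show "((\<lambda>x. A *v x) ^^ Suc k) w = x" using w s by simp
    fix i assume "i \<le> Suc k"
    then show "C *v ((\<lambda>x. A *v x) ^^ i) w = 0"
      using w s by (cases "i = Suc k") auto
  qed
qed

primrec seqg :: "('x \<Rightarrow> 'y \<Rightarrow> 'x set) \<Rightarrow> 'x \<Rightarrow> (nat \<Rightarrow> 'y) \<Rightarrow> nat \<Rightarrow> 'x" where
  "seqg g xh u 0 = xh"
| "seqg g xh u (Suc k) = (SOME v. v \<in> g (seqg g xh u k) (u k))"

lemma seqg_sol:
  assumes "setvalued_map UNIV UNIV g" "\<And>k. u k = h ((f ^^ k) x)"
  shows "observer_solution f h g xh x (seqg g xh u)"
  unfolding observer_solution_def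
proof (intro conjI allI)
  fix k
  have "g (seqg g xh u k) (u k) \<noteq> {}" using assms(1) unfolding setvalued_map_def by blast
  then have "seqg g xh u (Suc k) \<in> g (seqg g xh u k) (u k)" by (simp add: some_in_eq)
  then show "seqg g xh u (Suc k) \<in> g (seqg g xh u k) (h ((f ^^ k) x))" using assms(2) by simp
qed simp

lemma seqg_agree: "(\<forall>i<k. u i = u' i) \<Longrightarrow> seqg g xh u k = seqg g xh u' k"
  by (induction k) auto

lemma dir1:
  fixes A :: "real^'n^'n" and C :: "real^'n^'m"
  assumes "deadbeat_observable (UNIV :: (real^'n) set) (UNIV :: (real^'m) set)
           (\<lambda>x. A *v x) (\<lambda>x. C *v x)"
  shows "unobs_seq A C CARD('n) = {0}"
proof -
  let ?f = "\<lambda>x. A *v x" and ?h = "\<lambda>x. C *v x"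
  obtain g p where g: "setvalued_map UNIV UNIV g" and p: "p \<ge> 1"
    and db: "\<And>x xh psi k. observer_solution ?f ?h g xh x psi \<Longrightarrow> k \<ge> p \<Longrightarrow> psi k = (?f ^^ k) x"
    using assms unfolding deadbeat_observable_def deadbeat_observer_def by blast
  have nil: "(?f ^^ p) w = 0" if w: "\<forall>i<p. C *v ((?f ^^ i) w) = 0" for w
  proof -
    define u where "u = (\<lambda>k. ?h ((?f ^^ k) w))"
    define u0 where "u0 = (\<lambda>k::nat. ?h ((?f ^^ k) (0::real^'n)))"
    have s1: "seqg g 0 u p = (?f ^^ p) w"
      by (rule db[OF seqg_sol[OF g]]) (auto simp: u_def)
    have s2: "seqg g 0 u0 p = (?f ^^ p) 0"
      by (rule db[OF seqg_sol[OF g]]) (auto simp: u0_def)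
    have "seqg g 0 u p = seqg g 0 u0 p"
      by (rule seqg_agree) (use w in \<open>auto simp: u_def u0_def funpow_zero\<close>)
    then show ?thesis using s1 s2 funpow_zero by metis
  qed
  have big: "unobs_seq A C k = {0}" if "k \<ge> p" for k
  proof
    show "unobs_seq A C k \<subseteq> {0}"
    proof
      fix x assume "x \<in> unobs_seq A C k"
      from S_char[OF this] obtain w where w: "(?f ^^ k) w = x" "\<forall>i\<le>k. C *v ((?f ^^ i) w) = 0" by blast
      define w' where "w' = (?f ^^ (k - p)) w"
      have "\<forall>i<p. C *v ((?f ^^ i) w') = 0"
      proof (intro allI impI)
        fix i assume "i < p"
        have "(?f ^^ i) w' = (?f ^^ (i + (k - p))) w" by (simp add: w'_def funpow_add)
        then show "C *v ((?f ^^ i) w') = 0" using w(2) \<open>i < p\<close> that by simp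
      qed
      from nil[OF this] have "(?f ^^ (p + (k - p))) w = 0" by (simp add: w'_def funpow_add)
      then show "x \<in> {0}" using w(1) that by simp
    qed
  qed (simp add: S_zero)
  obtain k where k: "k \<le> CARD('n)" "unobs_seq A C (Suc k) = unobs_seq A C k"
    using S_exists_stable by blast
  have "unobs_seq A C CARD('n) = unobs_seq A C k"
    using S_stable[OF k(2), of "CARD('n) - k"] k(1) by simp
  also have "\<dots> = unobs_seq A C (k + (CARD('n) - k + p))"
    using S_stable[OF k(2)] by simp
  also have "\<dots> = {0}" by (rule big) simp
  finally show ?thesis .
qed

fun Eseq :: "real^'n^'n \<Rightarrow> real^'n^'m \<Rightarrow> nat \<Rightarrow> (real^'n) set" where
  "Eseq A C 0 = UNIV"
| "Eseq A C (Suc k) = (\<lambda>s. A *v s) ` (Eseq A C k \<inter> {x. C *v x = 0})"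

lemma E_sub: "subspace (Eseq A C k)"
  by (induction k) (auto intro!: subspace_inter linear_subspace_image linear_subspace_kernel matrix_vector_mul_linear subspace_UNIV)

lemma E_dec: "Eseq A C (Suc k) \<subseteq> Eseq A C k"
  by (induction k) auto

lemma E_anti: assumes "j \<le> k" shows "Eseq A C k \<subseteq> Eseq A C j"
  using assms
proof (induction k rule: dec_induct)
  case (step k) then show ?case using E_dec[of A C k] by blast
qed simp

lemma E_S: "Eseq A C k \<inter> {x. C *v x = 0} = unobs_seq A C k"
  by (induction k) auto

lemma dir2:
  fixes A :: "real^'n^'n" and C :: "real^'n^'m"
  assumes S: "unobs_seq A C CARD('n) = {0}"
  shows "deadbeat_observable (UNIV :: (real^'n) set) (UNIV :: (real^'m) set)
           (\<lambda>x. A *v x) (\<lambda>x. C *v x)"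
proof -
  let ?f = "\<lambda>x. A *v x" and ?h = "\<lambda>x. C *v x"
  define N where "N = Suc CARD('n)"
  have EN: "Eseq A C N = {0}"
    unfolding N_def using E_S[of A C "CARD('n)"] S by simp
  define D where "D = (\<lambda>j xh y. {A *v z | z. C *v z = y \<and> z - xh \<in> Eseq A C j})"
  define g where "g = (\<lambda>xh y. if \<exists>j\<le>N. D j xh y \<noteq> {}
      then D (GREATEST j. j \<le> N \<and> D j xh y \<noteq> {}) xh y else {0})"
  have gsv: "setvalued_map UNIV UNIV g"
    unfolding setvalued_map_def
  proof (intro ballI conjI)
    fix xh :: "real^'n" and y :: "real^'m"
    show "g xh y \<noteq> {}"
    proof (cases "\<exists>j\<le>N. D j xh y \<noteq> {}")
      case True
      then obtain j where "j \<le> N \<and> D j xh y \<noteq> {}" by blast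
      then have "(GREATEST j. j \<le> N \<and> D j xh y \<noteq> {}) \<le> N \<and> D (GREATEST j. j \<le> N \<and> D j xh y \<noteq> {}) xh y \<noteq> {}"
        by (rule GreatestI_nat[where b=N]) simp
      then show ?thesis using True by (simp add: g_def)
    qed (auto simp: g_def)
  qed simp
  have main: "psi k - (?f ^^ k) x \<in> Eseq A C (min k N)"
    if sol: "observer_solution ?f ?h g xh x psi" for x xh psi k
  proof (induction k)
    case 0 then show ?case by simp
  next
    case (Suc k)
    define m where "m = min k N"
    define xk where "xk = (?f ^^ k) x"
    define y where "y = C *v xk"
    have IH: "psi k - xk \<in> Eseq A C m" using Suc m_def xk_def by simp
    have "A *v xk \<in> D m (psi k) y"
    proof -
      have "xk - psi k = - (psi k - xk)" by simp
      then have "xk - psi k \<in> Eseq A C m" using IH E_sub subspace_neg by metis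
      then show ?thesis unfolding D_def y_def by blast
    qed
    then have ex: "\<exists>j\<le>N. D j (psi k) y \<noteq> {}" by (intro exI[of _ m]) (auto simp: m_def)
    define J where "J = (GREATEST j. j \<le> N \<and> D j (psi k) y \<noteq> {})"
    have mJ: "m \<le> J" unfolding J_def
      by (rule Greatest_le_nat[where b=N]) (use \<open>A *v xk \<in> D m (psi k) y\<close> m_def in auto)
    have "psi (Suc k) \<in> g (psi k) y" using sol unfolding observer_solution_def y_def xk_def by simp
    then have "psi (Suc k) \<in> D J (psi k) y" using ex by (simp add: g_def J_def)
    then obtain z where z: "psi (Suc k) = A *v z" "C *v z = y" "z - psi k \<in> Eseq A C J"
      unfolding D_def by blast
    have "z - psi k \<in> Eseq A C m" using z(3) E_anti[OF mJ] by blast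
    then have "(z - psi k) + (psi k - xk) \<in> Eseq A C m" using IH E_sub subspace_add by blast
    then have "z - xk \<in> Eseq A C m \<inter> {x. C *v x = 0}"
      using z(2) y_def by (simp add: matrix_vector_mult_diff_distrib)
    then have "A *v (z - xk) \<in> Eseq A C (Suc m)" by simp
    moreover have "Eseq A C (Suc m) \<subseteq> Eseq A C (min (Suc k) N)"
      by (rule E_anti) (simp add: m_def)
    ultimately have "A *v z - A *v xk \<in> Eseq A C (min (Suc k) N)"
      by (metis matrix_vector_mult_diff_distrib subsetD)
    then show ?case using z(1) by (simp add: xk_def)
  qed
  have "deadbeat_observer UNIV ?f ?h g"
    unfolding deadbeat_observer_def
  proof (intro exI[of _ N] conjI ballI allI impI)
    show "1 \<le> N" by (simp add: N_def)
    fix x xh :: "real^'n" and psi k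
    assume "observer_solution ?f ?h g xh x psi" "N \<le> k"
    then show "psi k = (?f ^^ k) x" using main[of xh x psi k] EN by simp
  qed
  then show ?thesis using gsv unfolding deadbeat_observable_def by blast
qed

theorem lemma1:
  fixes A :: "real^'n^'n" and C :: "real^'n^'m"
  shows "deadbeat_observable (UNIV :: (real^'n) set) (UNIV :: (real^'m) set)
           (\<lambda>x. A *v x) (\<lambda>x. C *v x)
         \<longleftrightarrow> unobs_seq A C CARD('n) = {0}"
  using dir1 dir2 by blast

end
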